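(* Let $\mathcal H$ be a finite-dimensional Hilbert space, $H_0$ a Hermitian operator on $\mathcal H$ whose largest and smallest eigenvalues are $N/2$ and $-N/2$ ($N>0$), with eigenvectors $|\lambda_+\rangle,|\lambda_-\rangle$. For a unit vector $|\psi_0\rangle$ and a unitary $U_1$ on $\mathcal H$, let $|\psi_\gamma\rangle=e^{i\gamma H_0}U_1e^{-i\gamma H_0}|\psi_0\rangle$. Then for all $\gamma$, $I_\gamma(|\psi_\gamma\rangle)\le 4N^2$, and $$\max_{|\psi_0\rangle,\,U_1} I_\gamma(|\psi_\gamma\rangle)=4N^2,$$ the maximum being attained e.g. by $|\psi_0\rangle=\tfrac{1}{\sqrt2}(|\lambda_+\rangle+e^{i\alpha}|\lambda_-\rangle)$ and any $U_1$ acting on $\mathrm{span}\{|\lambda_+\rangle,|\lambda_-\rangle\}$ as $\cos\chi\,\sigma_x+\sin\chi\,\sigma_y$ (in the basis $|\lambda_+\rangle,|\lambda_-\rangle$) and leaving its orthogonal complement invariant.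
   Context: $\sigma_x,\sigma_y$ are Pauli matrices. For a differentiable family of pure states, the quantum Fisher information is $I_\gamma=4\big(\langle\partial_\gamma\psi_\gamma|\partial_\gamma\psi_\gamma\rangle-|\langle\psi_\gamma|\partial_\gamma\psi_\gamma\rangle|^2\big)$. *)

theory Defs
  imports "HOL-Analysis.Analysis"
begin

text \<open>Finite-dimensional Hilbert space = complex ^ 'n with 'n a finite index type.
  Operators are complex matrices complex ^ 'n ^ 'n acting by *v.\<close>

definition cinner :: "complex ^ 'n \<Rightarrow> complex ^ 'n \<Rightarrow> complex" where
  "cinner x y = (\<Sum>i\<in>UNIV. cnj (x $ i) * y $ i)"

definition adjoint_mat :: "complex ^ 'n ^ 'n \<Rightarrow> complex ^ 'n ^ 'n" where
  "adjoint_mat A = (\<chi> i j. cnj (A $ j $ i))"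

definition hermitian :: "complex ^ 'n ^ 'n \<Rightarrow> bool" where
  "hermitian A \<longleftrightarrow> adjoint_mat A = A"

definition unitary :: "complex ^ 'n ^ 'n \<Rightarrow> bool" where
  "unitary U \<longleftrightarrow> adjoint_mat U ** U = mat 1"

definition is_eigenvalue :: "complex ^ 'n ^ 'n \<Rightarrow> complex \<Rightarrow> bool" where
  "is_eigenvalue A c \<longleftrightarrow> (\<exists>v. v \<noteq> 0 \<and> A *v v = c *s v)"

definition cmat_scale :: "complex \<Rightarrow> complex ^ 'n ^ 'n \<Rightarrow> complex ^ 'n ^ 'n" where
  "cmat_scale c A = (\<chi> i j. c * A $ i $ j)"

primrec mpow :: "complex ^ 'n ^ 'n \<Rightarrow> nat \<Rightarrow> complex ^ 'n ^ 'n" where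
  "mpow A 0 = mat 1"
| "mpow A (Suc k) = A ** mpow A k"

definition mexp :: "complex ^ 'n ^ 'n \<Rightarrow> complex ^ 'n ^ 'n" where
  "mexp A = (\<Sum>k. (1 / fact k) *\<^sub>R mpow A k)"

definition QFI :: "(real \<Rightarrow> complex ^ 'n) \<Rightarrow> real \<Rightarrow> real" where
  "QFI psi g = (let d = vector_derivative psi (at g) in
     4 * (Re (cinner d d) - (cmod (cinner (psi g) d))\<^sup>2))"

definition encoded :: "complex ^ 'n ^ 'n \<Rightarrow> complex ^ 'n ^ 'n \<Rightarrow> complex ^ 'n \<Rightarrow> real \<Rightarrow> complex ^ 'n" where
  "encoded H0 U1 psi0 g =
     (mexp (cmat_scale (\<i> * of_real g) H0) ** U1 ** mexp (cmat_scale (- \<i> * of_real g) H0)) *v psi0"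

end

theory Submission
  imports Defs
begin


lemma inner_cinner: "inner (x::complex^'n) y = Re (cinner x y)"
  by (simp add: inner_vec_def cinner_def inner_complex_def Re_sum)

lemma norm_sq_cinner: "(norm (x::complex^'n))^2 = Re (cinner x x)"
  by (simp add: power2_norm_eq_inner inner_cinner)

lemma cinner_cnj: "cnj (cinner x y) = cinner y x"
  by (simp add: cinner_def mult.commute)

lemma cinner_adj: "cinner (A *v x) y = cinner x (adjoint_mat A *v y)"
proof -
  have "cinner (A *v x) y = (\<Sum>i\<in>UNIV. \<Sum>j\<in>UNIV. cnj (x$j) * (cnj (A$i$j) * y$i))"
    unfolding cinner_def matrix_vector_mult_def by (simp add: sum_distrib_right sum_distrib_left mult_ac)
  also have "\<dots> = (\<Sum>j\<in>UNIV. \<Sum>i\<in>UNIV. cnj (x$j) * (cnj (A$i$j) * y$i))"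
    by (rule sum.swap)
  also have "\<dots> = cinner x (adjoint_mat A *v y)"
    unfolding cinner_def matrix_vector_mult_def adjoint_mat_def by (simp add: sum_distrib_left)
  finally show ?thesis .
qed

lemma cinner_herm: "hermitian H \<Longrightarrow> cinner (H *v x) y = cinner x (H *v y)"
  by (metis cinner_adj hermitian_def)

lemma cinner_herm_real: "hermitian H \<Longrightarrow> Im (cinner x (H *v x)) = 0"
proof -
  assume h: "hermitian H"
  have "cinner x (H *v x) = cnj (cinner x (H *v x))"
    by (metis cinner_cnj cinner_herm h)
  then have "Im (cinner x (H *v x)) = Im (cnj (cinner x (H *v x)))" by simp
  then show ?thesis by simp
qed

lemma cinner_add_right: "cinner x (y + z) = cinner x y + cinner x z"
  by (simp add: cinner_def distrib_left sum.distrib)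
lemma cinner_add_left: "cinner (x + y) z = cinner x z + cinner y z"
  by (simp add: cinner_def distrib_right sum.distrib)
lemma cinner_scale_right: "cinner x (c *s y) = c * cinner x y"
  by (simp add: cinner_def sum_distrib_left mult_ac)
lemma cinner_scale_left: "cinner (c *s x) y = cnj c * cinner x y"
  by (simp add: cinner_def sum_distrib_left mult_ac)

lemma unitary_norm: "unitary U \<Longrightarrow> norm (U *v x) = norm x"
proof -
  assume u: "unitary U"
  have "cinner (U *v x) (U *v x) = cinner x x"
    using u by (simp add: cinner_adj matrix_vector_mul_assoc unitary_def)
  then have "(norm (U *v x))^2 = (norm x)^2" by (simp add: norm_sq_cinner)
  then show ?thesis by (simp add: power2_eq_iff_nonneg)
qed

lemma mvs: "A *v (c *s v) = c *s (A *v (v::complex^'n))"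
  by (simp add: vec_eq_iff matrix_vector_mult_def sum_distrib_left mult_ac)

lemma scaleR_vs: "r *\<^sub>R (v::complex^'n) = complex_of_real r *s v"
  by (simp add: vec_eq_iff) (simp add: scaleR_conv_of_real)

lemma mvR: "A *v (r *\<^sub>R v) = r *\<^sub>R (A *v (v::complex^'n))"
  by (simp add: scaleR_vs mvs)

lemma quad_zero:
  fixes a b :: real
  assumes "\<And>t. 2*t*a + t^2*b \<le> 0"
  shows "a = 0"
proof -
  define t where "t = a / (\<bar>b\<bar> + 1)"
  have pos: "\<bar>b\<bar> + 1 > 0" by simp
  have h: "2*t*a + t^2*b \<le> 0" by (rule assms)
  have gen: "c \<noteq> 0 \<Longrightarrow> (2*(a/c)*a + (a/c)^2*b)*c^2 = 2*a*a*c + a^2*b" for c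
    by (simp add: field_simps power2_eq_square)
  have eq: "(2*t*a + t^2*b) * (\<bar>b\<bar>+1)^2 = 2*a*a*(\<bar>b\<bar>+1) + a^2*b"
    unfolding t_def using pos gen[of "\<bar>b\<bar>+1"] by simp
  have "(2*t*a + t^2*b) * (\<bar>b\<bar>+1)^2 \<le> 0"
    using h by (simp add: mult_nonpos_nonneg)
  then have "2*a*a*(\<bar>b\<bar>+1) + a^2*b \<le> 0" using eq by simp
  then have "a^2 * (2*\<bar>b\<bar> + 2 + b) \<le> 0" by (simp add: algebra_simps power2_eq_square)
  moreover have "2*\<bar>b\<bar> + 2 + b > 0" by linarith
  ultimately have "a^2 \<le> 0" by (simp add: mult_le_0_iff)
  then show ?thesis by simp
qed

lemma norm_add_sq: "(norm (a + t *\<^sub>R b))^2 = (norm (a::'a::real_inner))^2 + 2*t*inner a b + t^2 * (norm b)^2"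
proof -
  have "(norm (a + t *\<^sub>R b))^2 = inner (a + t *\<^sub>R b) (a + t *\<^sub>R b)" by (rule power2_norm_eq_inner)
  also have "\<dots> = inner a a + 2*t*inner a b + t^2 * inner b b"
    by (simp add: inner_add_left inner_add_right inner_commute[of b a] power2_eq_square algebra_simps)
  finally show ?thesis by (simp add: power2_norm_eq_inner)
qed

lemma opnorm_bound:
  fixes H :: "complex^'n^'n" and N :: real
  assumes herm: "hermitian H"
    and ev: "\<And>c. is_eigenvalue H c \<Longrightarrow> - N / 2 \<le> Re c \<and> Re c \<le> N / 2"
  shows "norm (H *v x) \<le> N / 2 * norm x"
proof -
  define S where "S = sphere (0::complex^'n) 1"
  have "compact S" unfolding S_def by simp
  moreover have "(1::complex^'n) \<noteq> 0" by (simp add: vec_eq_iff)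
  then have "inverse (norm (1::complex^'n)) *\<^sub>R (1::complex^'n) \<in> S" unfolding S_def by simp
  then have "S \<noteq> {}" by blast
  moreover have "continuous_on S (\<lambda>x. (norm (H *v x))^2)"
    by (intro continuous_on_power continuous_on_norm linear_continuous_on matrix_vector_mul_bounded_linear)
  ultimately have "\<exists>x\<in>S. \<forall>y\<in>S. (norm (H *v y))^2 \<le> (norm (H *v x))^2"
    by (rule continuous_attains_sup)
  then obtain x0 where x0: "x0 \<in> S" and mx: "\<And>y. y \<in> S \<Longrightarrow> (norm (H *v y))^2 \<le> (norm (H *v x0))^2"
    by blast
  define \<mu> where "\<mu> = (norm (H *v x0))^2"
  have nx0: "norm x0 = 1" using x0 S_def by simp
  have gen: "(norm (H *v z))^2 \<le> \<mu> * (norm z)^2" for z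
  proof (cases "z = 0")
    case True then show ?thesis by simp
  next
    case False
    then have nz: "norm z > 0" by simp
    have "(inverse (norm z)) *\<^sub>R z \<in> S" unfolding S_def using nz by simp
    then have "(norm (H *v ((inverse (norm z)) *\<^sub>R z)))^2 \<le> \<mu>" using mx \<mu>_def by simp
    moreover have "H *v ((inverse (norm z)) *\<^sub>R z) = inverse (norm z) *\<^sub>R (H *v z)"
      by (simp add: mvR)
    moreover have "(norm (inverse (norm z) *\<^sub>R (H *v z)))^2 = (norm (H *v z))^2 / (norm z)^2"
      using nz by (simp add: power_divide divide_inverse power_mult_distrib power_inverse)
    ultimately have "(norm (H *v z))^2 / (norm z)^2 \<le> \<mu>" by simp
    then show ?thesis using nz by (simp add: divide_le_eq mult.commute)
  qed
  have lin: "inner (H *v x0) (H *v y) - \<mu> * inner x0 y = 0" for y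
  proof (rule quad_zero[where b = "(norm (H *v y))^2 - \<mu> * (norm y)^2"])
    fix t :: real
    have "(norm (H *v (x0 + t *\<^sub>R y)))^2 \<le> \<mu> * (norm (x0 + t *\<^sub>R y))^2" by (rule gen)
    moreover have "H *v (x0 + t *\<^sub>R y) = H *v x0 + t *\<^sub>R (H *v y)"
      by (simp add: matrix_vector_right_distrib mvR)
    moreover have "(norm (H *v (x0 + t *\<^sub>R y)))^2 = \<mu> + 2*t*inner (H *v x0) (H *v y) + t^2 * (norm (H *v y))^2"
      unfolding \<mu>_def calculation(2) by (rule norm_add_sq)
    moreover have "(norm (x0 + t *\<^sub>R y))^2 = 1 + 2*t*inner x0 y + t^2 * (norm y)^2"
      using nx0 norm_add_sq[of x0 t y] by simp
    ultimately have "\<mu> + 2*t*inner (H *v x0) (H *v y) + t^2 * (norm (H *v y))^2 \<le> \<mu> * (1 + 2*t*inner x0 y + t^2 * (norm y)^2)"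
      by simp
    moreover have "\<mu> * (1 + 2*t*inner x0 y + t^2 * (norm y)^2) = \<mu> + 2*t*(\<mu> * inner x0 y) + t^2*(\<mu> * (norm y)^2)"
      by (simp add: algebra_simps)
    moreover have "2 * t * (inner (H *v x0) (H *v y) - \<mu> * inner x0 y) + t\<^sup>2 * ((norm (H *v y))\<^sup>2 - \<mu> * (norm y)\<^sup>2)
       = (2*t*inner (H *v x0) (H *v y) + t^2 * (norm (H *v y))^2) - (2*t*(\<mu> * inner x0 y) + t^2*(\<mu> * (norm y)^2))"
      by (simp add: algebra_simps)
    ultimately show "2 * t * (inner (H *v x0) (H *v y) - \<mu> * inner x0 y) + t\<^sup>2 * ((norm (H *v y))\<^sup>2 - \<mu> * (norm y)\<^sup>2) \<le> 0"
      by linarith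
  qed
  have "inner (H *v (H *v x0) - \<mu> *\<^sub>R x0) y = 0" for y
  proof -
    have "inner (H *v x0) (H *v y) = inner (H *v (H *v x0)) y"
      using herm by (simp add: inner_cinner cinner_herm)
    then show ?thesis using lin[of y] by (simp add: inner_diff_left)
  qed
  from this[of "H *v (H *v x0) - \<mu> *\<^sub>R x0"]
  have H2: "H *v (H *v x0) = complex_of_real \<mu> *s x0" by (simp add: scaleR_vs)
  define s where "s = sqrt \<mu>"
  have s0: "s \<ge> 0" and ss: "s * s = \<mu>" unfolding s_def \<mu>_def by (simp_all add: power2_eq_square)
  have x0nz: "x0 \<noteq> 0" using nx0 by auto
  have "s \<le> N / 2"
  proof (cases "H *v x0 + complex_of_real s *s x0 = 0")
    case True
    then have "H *v x0 = complex_of_real (- s) *s x0"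
      by (simp add: vec_eq_iff add_eq_0_iff)
    then have "is_eigenvalue H (complex_of_real (- s))" using x0nz is_eigenvalue_def by blast
    then show ?thesis using ev s0 by fastforce
  next
    case False
    define z where "z = H *v x0 + complex_of_real s *s x0"
    have cs: "complex_of_real \<mu> = complex_of_real s * complex_of_real s" using ss by (metis of_real_mult)
    have "H *v z = complex_of_real s *s z"
      unfolding z_def using H2 cs
      by (simp add: matrix_vector_right_distrib mvs vec_eq_iff algebra_simps)
    then have "is_eigenvalue H (complex_of_real s)" using False z_def is_eigenvalue_def by blast
    then show ?thesis using ev by fastforce
  qed
  then have "\<mu> \<le> (N/2)^2" using mult_mono[of s "N/2" s "N/2"] s0 ss by (simp add: power2_eq_square)
  then have "(norm (H *v x))^2 \<le> (N/2 * norm x)^2"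
  proof -
    have "\<mu> * (norm x)^2 \<le> (N/2)^2 * (norm x)^2" using \<open>\<mu> \<le> (N/2)^2\<close> by (simp add: mult_right_mono)
    moreover have "(N/2)^2 * (norm x)^2 = (N/2 * norm x)^2" by (simp only: power_mult_distrib)
    ultimately show ?thesis using gen[of x] by linarith
  qed
  moreover have "N / 2 \<ge> 0" using \<open>s \<le> N/2\<close> s0 by simp
  ultimately show ?thesis using power2_le_imp_le by simp
qed



lemma cscale_mult_left: "cmat_scale c A ** B = cmat_scale c (A ** B)"
  by (simp add: vec_eq_iff cmat_scale_def matrix_matrix_mult_def sum_distrib_left mult_ac)
lemma cscale_mult_right: "A ** cmat_scale c B = cmat_scale c (A ** B)"
  by (simp add: vec_eq_iff cmat_scale_def matrix_matrix_mult_def sum_distrib_left mult_ac)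
lemma cscale_cscale: "cmat_scale c (cmat_scale d A) = cmat_scale (c*d) A"
  by (simp add: vec_eq_iff cmat_scale_def mult_ac)
lemma cscale_one: "cmat_scale 1 A = A"
  by (simp add: vec_eq_iff cmat_scale_def)

lemma mpow_scale: "mpow (cmat_scale c A) k = cmat_scale (c^k) (mpow A k)"
  by (induction k) (simp_all add: cscale_one cscale_mult_left cscale_mult_right cscale_cscale mult_ac)

lemma mpow_Suc': "mpow A (Suc n) = mpow A n ** A"
  by (induction n) (simp_all add: matrix_mul_assoc)

lemma mpow_norm:
  assumes "\<And>x. norm (A *v x) \<le> K * norm x" "K \<ge> 0"
  shows "norm (mpow A k *v x) \<le> K^k * norm (x::complex^'n)"
proof (induction k)
  case 0 then show ?case by simp
next
  case (Suc k)
  have "norm (mpow A (Suc k) *v x) = norm (A *v (mpow A k *v x))"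
    by (simp add: matrix_vector_mul_assoc)
  also have "\<dots> \<le> K * norm (mpow A k *v x)" by (rule assms(1))
  also have "\<dots> \<le> K * (K^k * norm x)" using Suc assms(2) by (simp add: mult_left_mono)
  finally show ?case by simp
qed

lemma entry_axis: "(A::complex^'n^'n) $ a $ b = (A *v axis b 1) $ a"
proof -
  have "(A *v axis b 1) $ a = (\<Sum>j\<in>UNIV. A$a$j * (if j = b then 1 else 0))"
    by (simp add: matrix_vector_mult_def axis_def)
  also have "\<dots> = (\<Sum>j\<in>UNIV. if j = b then A$a$j else 0)" by (rule sum.cong) auto
  also have "\<dots> = A$a$b" by simp
  finally show ?thesis by simp
qed

lemma norm_axis_c: "norm (axis b (1::complex)) = 1"
  by (simp add: norm_eq_1 inner_axis')

lemma mpow_entry_bound: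
  assumes "\<And>x. norm (A *v x) \<le> K * norm x" "K \<ge> 0"
  shows "norm (mpow A k $ a $ b) \<le> K^k"
proof -
  have "norm (mpow A k $ a $ b) \<le> norm (mpow A k *v axis b 1)"
    unfolding entry_axis by (rule Finite_Cartesian_Product.norm_nth_le)
  also have "\<dots> \<le> K^k * norm (axis b (1::complex))" by (rule mpow_norm[OF assms])
  finally show ?thesis by (simp add: norm_axis_c)
qed

lemma summable_vec:
  fixes f :: "nat \<Rightarrow> 'a::real_normed_vector ^'n"
  assumes "\<And>i. summable (\<lambda>n. f n $ i)"
  shows "summable f" "(suminf f) $ i = (\<Sum>n. f n $ i)"
proof -
  have "f sums (\<chi> i. \<Sum>n. f n $ i)"
    unfolding sums_def
  proof (rule vec_tendstoI)
    fix i
    show "((\<lambda>n. sum f {..<n} $ i) \<longlongrightarrow> (\<chi> i. \<Sum>n. f n $ i) $ i) sequentially"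
      using summable_LIMSEQ[OF assms[of i]] by simp
  qed
  then show "summable f" "(suminf f) $ i = (\<Sum>n. f n $ i)"
    by (auto simp: sums_iff)
qed

definition ecoef :: "complex \<Rightarrow> nat \<Rightarrow> complex" where
  "ecoef c n = c^n / fact n"

lemma mexp_entry:
  assumes "\<And>x. norm (A *v x) \<le> K * norm x" "K \<ge> 0"
  shows "summable (\<lambda>n. ecoef c n * mpow A n $ a $ b)"
    and "mexp (cmat_scale c A) $ a $ b = (\<Sum>n. ecoef c n * mpow A n $ a $ b)"
proof -
  define F where "F n = (1 / fact n) *\<^sub>R mpow (cmat_scale c A) n" for n
  have Fe: "F n $ a' $ b' = ecoef c n * mpow A n $ a' $ b'" for n a' b'
    unfolding F_def mpow_scale by (simp add: cmat_scale_def ecoef_def) (simp add: scaleR_conv_of_real divide_inverse mult_ac)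
  have sm: "summable (\<lambda>n. ecoef c n * mpow A n $ a' $ b')" for a' b'
  proof (rule summable_comparison_test)
    show "summable (\<lambda>n. (norm c * K)^n /\<^sub>R fact n)" by (rule summable_exp_generic)
    show "\<exists>N. \<forall>n\<ge>N. norm (ecoef c n * mpow A n $ a' $ b') \<le> (norm c * K)^n /\<^sub>R fact n"
    proof (intro exI allI impI)
      fix n :: nat
      have "norm (ecoef c n * mpow A n $ a' $ b') = (norm c)^n / fact n * norm (mpow A n $ a' $ b')"
        by (simp add: ecoef_def norm_mult norm_divide norm_power)
      also have "\<dots> \<le> (norm c)^n / fact n * K^n"
        by (rule mult_left_mono[OF mpow_entry_bound[OF assms]]) simp
      finally show "norm (ecoef c n * mpow A n $ a' $ b') \<le> (norm c * K)^n /\<^sub>R fact n"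
        by (simp add: power_mult_distrib divide_inverse mult_ac)
    qed
  qed
  then show "summable (\<lambda>n. ecoef c n * mpow A n $ a $ b)" .
  have sr: "summable (\<lambda>n. F n $ a')" for a'
    by (rule summable_vec(1)) (simp add: Fe sm)
  have "mexp (cmat_scale c A) = suminf F" unfolding mexp_def F_def by (rule refl)
  then have "mexp (cmat_scale c A) $ a $ b = (\<Sum>n. F n $ a) $ b"
    using summable_vec(2)[of F a, OF sr] by simp
  also have "\<dots> = (\<Sum>n. F n $ a $ b)"
    by (rule summable_vec(2)) (simp add: Fe sm)
  finally show "mexp (cmat_scale c A) $ a $ b = (\<Sum>n. ecoef c n * mpow A n $ a $ b)"
    by (simp add: Fe)
qed



lemma exch:
  fixes f :: "nat \<Rightarrow> 'k::finite \<Rightarrow> complex"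
  assumes "\<And>k. summable (\<lambda>n. f n k)"
  shows "(\<Sum>k\<in>UNIV. (\<Sum>n. f n k) * w k) = (\<Sum>n. \<Sum>k\<in>UNIV. f n k * w k)"
    and "summable (\<lambda>n. \<Sum>k\<in>UNIV. f n k * w k)"
proof -
  have s: "summable (\<lambda>n. f n k * w k)" for k
    using assms[of k] by (rule summable_mult2)
  have "(\<Sum>k\<in>UNIV. (\<Sum>n. f n k) * w k) = (\<Sum>k\<in>UNIV. \<Sum>n. f n k * w k)"
    using assms by (simp add: suminf_mult2)
  also have "\<dots> = (\<Sum>n. \<Sum>k\<in>UNIV. f n k * w k)"
    using s by (rule suminf_sum[symmetric])
  finally show "(\<Sum>k\<in>UNIV. (\<Sum>n. f n k) * w k) = (\<Sum>n. \<Sum>k\<in>UNIV. f n k * w k)" .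
  show "summable (\<lambda>n. \<Sum>k\<in>UNIV. f n k * w k)" using s by (rule summable_sum)
qed

lemma exch2:
  fixes f :: "nat \<Rightarrow> 'k::finite \<Rightarrow> complex"
  assumes "\<And>k. summable (\<lambda>n. f n k)"
  shows "(\<Sum>k\<in>UNIV. w k * (\<Sum>n. f n k)) = (\<Sum>n. \<Sum>k\<in>UNIV. w k * f n k)"
    and "summable (\<lambda>n. \<Sum>k\<in>UNIV. w k * f n k)"
  using exch[OF assms, where w=w] by (simp_all add: mult.commute)

context
  fixes H :: "complex^'n^'n" and K :: real
  assumes bnd: "\<And>x. norm (H *v x) \<le> K * norm x" and K0: "K \<ge> 0"
begin

lemma mexp_mult_right:
  "(mexp (cmat_scale c H) ** B) $ a $ b = (\<Sum>n. ecoef c n * (mpow H n ** B) $ a $ b)"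
proof -
  have "(mexp (cmat_scale c H) ** B) $ a $ b = (\<Sum>k\<in>UNIV. (\<Sum>n. ecoef c n * mpow H n $ a $ k) * B $ k $ b)"
    by (simp add: matrix_matrix_mult_def mexp_entry[OF bnd K0])
  also have "\<dots> = (\<Sum>n. \<Sum>k\<in>UNIV. ecoef c n * mpow H n $ a $ k * B $ k $ b)"
    by (rule exch(1)) (rule mexp_entry(1)[OF bnd K0])
  also have "\<dots> = (\<Sum>n. ecoef c n * (mpow H n ** B) $ a $ b)"
    by (simp add: matrix_matrix_mult_def sum_distrib_left mult_ac)
  finally show ?thesis .
qed

lemma mexp_mult_left:
  "(B ** mexp (cmat_scale c H)) $ a $ b = (\<Sum>n. ecoef c n * (B ** mpow H n) $ a $ b)"
proof -
  have "(B ** mexp (cmat_scale c H)) $ a $ b = (\<Sum>k\<in>UNIV. B $ a $ k * (\<Sum>n. ecoef c n * mpow H n $ k $ b))"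
    by (simp add: matrix_matrix_mult_def mexp_entry[OF bnd K0])
  also have "\<dots> = (\<Sum>n. \<Sum>k\<in>UNIV. B $ a $ k * (ecoef c n * mpow H n $ k $ b))"
    by (rule exch2(1)) (rule mexp_entry(1)[OF bnd K0])
  also have "\<dots> = (\<Sum>n. ecoef c n * (B ** mpow H n) $ a $ b)"
    by (simp add: matrix_matrix_mult_def sum_distrib_left mult_ac)
  finally show ?thesis .
qed

lemma mexp_vec:
  "(mexp (cmat_scale c H) *v v) $ a = (\<Sum>n. ecoef c n * (mpow H n *v v) $ a)"
proof -
  have "(mexp (cmat_scale c H) *v v) $ a = (\<Sum>k\<in>UNIV. (\<Sum>n. ecoef c n * mpow H n $ a $ k) * v $ k)"
    by (simp add: matrix_vector_mult_def mexp_entry[OF bnd K0])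
  also have "\<dots> = (\<Sum>n. \<Sum>k\<in>UNIV. ecoef c n * mpow H n $ a $ k * v $ k)"
    by (rule exch(1)) (rule mexp_entry(1)[OF bnd K0])
  also have "\<dots> = (\<Sum>n. ecoef c n * (mpow H n *v v) $ a)"
    by (simp add: matrix_vector_mult_def sum_distrib_left mult_ac)
  finally show ?thesis .
qed

lemma mexp_commute: "mexp (cmat_scale c H) ** cmat_scale d H = cmat_scale d H ** mexp (cmat_scale c H)"
proof -
  have "mpow H n ** cmat_scale d H = cmat_scale d H ** mpow H n" for n
    by (simp add: cscale_mult_left cscale_mult_right flip: mpow_Suc' mpow.simps(2))
  then show ?thesis by (simp add: vec_eq_iff mexp_mult_left mexp_mult_right)
qed

lemma mexp_zero: "mexp (cmat_scale 0 H) = mat 1"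
proof -
  have "mexp (cmat_scale 0 H) $ a $ b = mat 1 $ a $ b" for a b
  proof -
    have "mexp (cmat_scale 0 H) $ a $ b = (\<Sum>n. (mpow H n $ a $ b / fact n) * 0 ^ n)"
      by (simp add: mexp_entry[OF bnd K0] ecoef_def mult_ac)
    also have "\<dots> = mat 1 $ a $ b" by (subst powser_zero) simp
    finally show ?thesis .
  qed
  then show ?thesis by (simp add: vec_eq_iff)
qed

lemma mexp_eigen:
  assumes "H *v v = l *s v"
  shows "mexp (cmat_scale c H) *v v = exp (c * l) *s v"
proof -
  have pv: "mpow H n *v v = (l^n) *s v" for n
    by (induction n) (simp_all add: matrix_vector_mul_assoc[symmetric] assms mvs vector_smult_assoc mult.commute)
  have "(mexp (cmat_scale c H) *v v) $ a = (exp (c * l) *s v) $ a" for a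
  proof -
    have "(mexp (cmat_scale c H) *v v) $ a = (\<Sum>n. (c*l)^n /\<^sub>R fact n * v $ a)"
      by (simp add: mexp_vec pv ecoef_def power_mult_distrib scaleR_conv_of_real divide_inverse mult_ac)
    also have "\<dots> = (\<Sum>n. (c*l)^n /\<^sub>R fact n) * v $ a"
      by (rule suminf_mult2[symmetric]) (rule summable_exp_generic)
    also have "\<dots> = exp (c * l) * v $ a"
      using exp_converges[of "c*l"] by (simp add: sums_iff)
    finally show ?thesis by simp
  qed
  then show ?thesis by (simp add: vec_eq_iff)
qed

end



lemma vec_hvd:
  fixes f :: "real \<Rightarrow> 'a::real_normed_vector ^'n"
  assumes "\<And>i. ((\<lambda>x. f x $ i) has_vector_derivative D $ i) (at x)"
  shows "(f has_vector_derivative D) (at x)"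
proof -
  have "((\<lambda>y. ((f y - f x) - (y - x) *\<^sub>R D) /\<^sub>R norm (y - x)) \<longlongrightarrow> 0) (at x)"
  proof (rule vec_tendstoI)
    fix i
    from assms[of i] have "((\<lambda>y. (1 / \<bar>y - x\<bar>) *\<^sub>R (f y $ i - (f x $ i + (y - x) *\<^sub>R D $ i))) \<longlongrightarrow> 0) (at x)"
      unfolding has_vector_derivative_def has_derivative_at2 by simp
    then show "((\<lambda>y. (((f y - f x) - (y - x) *\<^sub>R D) /\<^sub>R norm (y - x)) $ i) \<longlongrightarrow> 0 $ i) (at x)"
      by (simp add: diff_diff_eq inverse_eq_divide)
  qed
  then show ?thesis
    unfolding has_vector_derivative_def has_derivative_at2 by (simp add: bounded_linear_scaleR_left diff_diff_eq inverse_eq_divide)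
qed

context
  fixes H :: "complex^'n^'n" and K :: real
  assumes bnd: "\<And>x. norm (H *v x) \<le> K * norm x" and K0: "K \<ge> 0"
begin

lemma DE_entry:
  "((\<lambda>g. mexp (cmat_scale (c * of_real g) H) $ a $ b) has_vector_derivative
      (mexp (cmat_scale (c * of_real g) H) ** cmat_scale c H) $ a $ b) (at g)"
proof -
  define cf where "cf n = c^n / fact n * mpow H n $ a $ b" for n
  have eq: "mexp (cmat_scale (c * z) H) $ a $ b = (\<Sum>n. cf n * z^n)" for z
    by (simp add: mexp_entry(2)[OF bnd K0] cf_def ecoef_def power_mult_distrib mult_ac)
  have sm: "summable (\<lambda>n. cf n * y^n)" for y
    using mexp_entry(1)[OF bnd K0, of "c*y" a b]
    by (simp add: cf_def ecoef_def power_mult_distrib mult_ac)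
  have d: "((\<lambda>z. \<Sum>n. cf n * z^n) has_field_derivative (\<Sum>n. diffs cf n * (of_real g)^n)) (at (of_real g))"
    by (rule termdiffs_strong_converges_everywhere) (rule sm)
  have trm: "diffs cf n * z^n = ecoef (c * z) n * (mpow H n ** cmat_scale c H) $ a $ b" for n z
  proof -
    have "(mpow H n ** cmat_scale c H) $ a $ b = c * mpow H (Suc n) $ a $ b"
      unfolding cscale_mult_right mpow_Suc'[symmetric] by (simp add: cmat_scale_def)
    moreover have "(1 + of_nat n :: complex) \<noteq> 0"
      by (metis of_nat_Suc of_nat_eq_0_iff nat.distinct(1) add.commute)
    moreover have "(fact n :: complex) \<noteq> 0" by simp
    ultimately have "(fact n + fact n * of_nat n :: complex) \<noteq> 0"
      by (metis mult_eq_0_iff mult_1_right distrib_left add.commute)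
    with \<open>(mpow H n ** cmat_scale c H) $ a $ b = c * mpow H (Suc n) $ a $ b\<close> show ?thesis
      unfolding diffs_def cf_def ecoef_def
      by (simp add: power_mult_distrib field_simps del: mpow.simps)
  qed
  have "(\<Sum>n. diffs cf n * (of_real g)^n) = (mexp (cmat_scale (c * of_real g) H) ** cmat_scale c H) $ a $ b"
    by (simp add: trm mexp_mult_right[OF bnd K0])
  with has_vector_derivative_real_field[OF d] show ?thesis
    by (simp add: eq)
qed

lemma DE:
  "((\<lambda>g. mexp (cmat_scale (c * of_real g) H)) has_vector_derivative
      (mexp (cmat_scale (c * of_real g) H) ** cmat_scale c H)) (at g)"
  by (intro vec_hvd DE_entry)

end



lemma smat_vec: "(r *\<^sub>R A) *v (x::complex^'n) = r *\<^sub>R (A *v x)"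
  by (simp add: vec_eq_iff matrix_vector_mult_def scaleR_sum_right)

lemma BB: "bounded_bilinear (\<lambda>(A::complex^'n^'n) (x::complex^'n). A *v x)"
proof -
  have "bilinear (\<lambda>(A::complex^'n^'n) (x::complex^'n). A *v x)"
    unfolding bilinear_def
    by (auto intro!: linearI simp: matrix_vector_right_distrib matrix_vector_mult_add_rdistrib smat_vec mvR)
  then show ?thesis by (simp add: bilinear_conv_bounded_bilinear)
qed

lemma cscale_vec: "cmat_scale c A *v x = c *s (A *v (x::complex^'n))"
  by (simp add: vec_eq_iff cmat_scale_def matrix_vector_mult_def sum_distrib_left mult_ac)

lemma mexp_neg: "cmat_scale (- \<i> * complex_of_real g) H = cmat_scale (\<i> * complex_of_real (- g)) H"
  by simp

context
  fixes H :: "complex^'n^'n" and K :: real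
  assumes bnd: "\<And>x. norm (H *v x) \<le> K * norm x" and K0: "K \<ge> 0" and herm: "hermitian H"
begin

lemma DEv:
  "((\<lambda>g. mexp (cmat_scale (c * of_real g) H) *v v) has_vector_derivative
      (mexp (cmat_scale (c * of_real g) H) *v (c *s (H *v v)))) (at g)"
proof -
  have "((\<lambda>g. mexp (cmat_scale (c * of_real g) H) *v v) has_vector_derivative
      (mexp (cmat_scale (c * of_real g) H) *v 0 + (mexp (cmat_scale (c * of_real g) H) ** cmat_scale c H) *v v)) (at g)"
    by (rule bounded_bilinear.has_vector_derivative[OF BB DE[OF bnd K0]]) simp
  then show ?thesis by (simp add: matrix_vector_mul_assoc[symmetric] cscale_vec)
qed

lemma NP: "norm (mexp (cmat_scale (\<i> * of_real g) H) *v v) = norm v"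
proof -
  define w where "w g = mexp (cmat_scale (\<i> * of_real g) H) *v v" for g
  have dw: "(w has_vector_derivative (\<i> *s (H *v w g))) (at g)" for g
  proof -
    have "(w has_vector_derivative (mexp (cmat_scale (\<i> * of_real g) H) *v (\<i> *s (H *v v)))) (at g)"
      unfolding w_def by (rule DEv)
    moreover have "mexp (cmat_scale (\<i> * of_real g) H) *v (\<i> *s (H *v v)) = \<i> *s (H *v w g)"
      unfolding w_def
      using mexp_commute[OF bnd K0, of "\<i> * of_real g" "\<i>"]
      by (metis cscale_vec matrix_vector_mul_assoc)
    ultimately show ?thesis by simp
  qed
  define f where "f g = inner (w g) (w g)" for g
  have "DERIV f g :> 0" for g
  proof -
    have "(f has_vector_derivative (inner (w g) (\<i> *s (H *v w g)) + inner (\<i> *s (H *v w g)) (w g))) (at g)"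
      unfolding f_def by (rule bounded_bilinear.has_vector_derivative[OF bounded_bilinear_inner dw dw])
    moreover have "inner (w g) (\<i> *s (H *v w g)) = 0"
      using cinner_herm_real[OF herm, of "w g"]
      by (simp add: inner_cinner cinner_scale_right)
    ultimately show ?thesis
      by (simp add: has_real_derivative_iff_has_vector_derivative inner_commute)
  qed
  then have "f g = f 0" using DERIV_isconst_all by blast
  moreover have "w 0 = v" unfolding w_def using mexp_zero[OF bnd K0] by simp
  ultimately have "(norm (w g))^2 = (norm v)^2" unfolding f_def by (simp add: power2_norm_eq_inner)
  then show ?thesis unfolding w_def by (simp add: power2_eq_iff_nonneg)
qed

lemma NPm: "norm (mexp (cmat_scale (- \<i> * of_real g) H) *v v) = norm v"
  using NP[of "-g"] by (simp only: mexp_neg)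

lemma NPm': "norm (mexp (cmat_scale (- (\<i> * of_real g)) H) *v v) = norm v"
  using NPm[of g v] by simp

lemma enc_eq: "encoded H U psi0 g =
  mexp (cmat_scale (\<i> * of_real g) H) *v (U *v (mexp (cmat_scale (- \<i> * of_real g) H) *v psi0))"
  by (simp add: encoded_def matrix_vector_mul_assoc matrix_mul_assoc)

lemma enc_deriv:
  "(encoded H U psi0 has_vector_derivative
     (mexp (cmat_scale (\<i> * of_real g) H) *v (U *v (mexp (cmat_scale (- \<i> * of_real g) H) *v ((- \<i>) *s (H *v psi0))))
      + mexp (cmat_scale (\<i> * of_real g) H) *v (\<i> *s (H *v (U *v (mexp (cmat_scale (- \<i> * of_real g) H) *v psi0)))))) (at g)"
proof -
  have d1: "((\<lambda>g. U *v (mexp (cmat_scale (- \<i> * of_real g) H) *v psi0)) has_vector_derivative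
      U *v (mexp (cmat_scale (- \<i> * of_real g) H) *v ((- \<i>) *s (H *v psi0)))) (at g)"
    by (rule bounded_linear.has_vector_derivative[OF matrix_vector_mul_bounded_linear DEv])
  have "(encoded H U psi0 has_vector_derivative
     (mexp (cmat_scale (\<i> * of_real g) H) *v (U *v (mexp (cmat_scale (- \<i> * of_real g) H) *v ((- \<i>) *s (H *v psi0))))
      + (mexp (cmat_scale (\<i> * of_real g) H) ** cmat_scale \<i> H) *v (U *v (mexp (cmat_scale (- \<i> * of_real g) H) *v psi0)))) (at g)"
    unfolding enc_eq[abs_def]
    by (rule bounded_bilinear.has_vector_derivative[OF BB DE[OF bnd K0] d1])
  then show ?thesis by (simp add: matrix_vector_mul_assoc[symmetric] cscale_vec)
qed

end



lemma norm_smult_unit: "cmod c = 1 \<Longrightarrow> norm (c *s (v::complex^'n)) = norm v"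
proof -
  assume c: "cmod c = 1"
  have "cnj c * c = 1" using c complex_norm_square[of c] by (simp add: mult.commute)
  then have "cinner (c *s v) (c *s v) = cinner v v"
    by (simp add: cinner_scale_left cinner_scale_right mult.assoc[symmetric] mult.commute[of c])
  then have "(norm (c *s v))^2 = (norm v)^2" by (simp add: norm_sq_cinner)
  then show ?thesis by (simp add: power2_eq_iff_nonneg)
qed

context
  fixes H :: "complex^'n^'n" and K :: real
  assumes bnd: "\<And>x. norm (H *v x) \<le> K * norm x" and K0: "K \<ge> 0" and herm: "hermitian H"
begin

lemma QFI_bound:
  assumes U: "unitary U" and n1: "norm psi0 = 1"
  shows "QFI (encoded H U psi0) g \<le> 4 * (2*K)^2"
proof -
  define P where "P = mexp (cmat_scale (\<i> * of_real g) H)"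
  define Q where "Q = mexp (cmat_scale (- \<i> * of_real g) H)"
  define d where "d = P *v (U *v (Q *v ((- \<i>) *s (H *v psi0)))) + P *v (\<i> *s (H *v (U *v (Q *v psi0))))"
  have vd: "vector_derivative (encoded H U psi0) (at g) = d"
    unfolding d_def P_def Q_def by (rule vector_derivative_at[OF enc_deriv[OF bnd K0 herm]])
  have n1': "norm (P *v (U *v (Q *v ((- \<i>) *s (H *v psi0))))) \<le> K"
  proof -
    have "norm (P *v (U *v (Q *v ((- \<i>) *s (H *v psi0))))) = norm (H *v psi0)"
      unfolding P_def Q_def
      by (simp add: NP[OF bnd K0 herm] NPm[OF bnd K0 herm] NPm'[OF bnd K0 herm] unitary_norm[OF U] norm_smult_unit)
    then show ?thesis using bnd[of psi0] n1 by simp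
  qed
  have n2': "norm (P *v (\<i> *s (H *v (U *v (Q *v psi0))))) \<le> K"
  proof -
    have "norm (P *v (\<i> *s (H *v (U *v (Q *v psi0))))) = norm (H *v (U *v (Q *v psi0)))"
      unfolding P_def by (simp add: NP[OF bnd K0 herm] norm_smult_unit)
    also have "\<dots> \<le> K * norm (U *v (Q *v psi0))" by (rule bnd)
    also have "norm (U *v (Q *v psi0)) = 1"
      unfolding Q_def by (simp add: NPm[OF bnd K0 herm] NPm'[OF bnd K0 herm] unitary_norm[OF U] n1)
    finally show ?thesis by simp
  qed
  have nd: "norm d \<le> 2*K"
    unfolding d_def using norm_triangle_ineq[of "P *v (U *v (Q *v ((- \<i>) *s (H *v psi0))))"
        "P *v (\<i> *s (H *v (U *v (Q *v psi0))))"] n1' n2' by linarith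
  have "QFI (encoded H U psi0) g = 4 * (Re (cinner d d) - (cmod (cinner (encoded H U psi0 g) d))^2)"
    unfolding QFI_def vd Let_def by simp
  also have "\<dots> \<le> 4 * Re (cinner d d)" by simp
  also have "\<dots> = 4 * (norm d)^2" by (simp add: norm_sq_cinner)
  also have "\<dots> \<le> 4 * (2*K)^2"
    using power_mono[OF nd norm_ge_zero, of 2] by simp
  finally show ?thesis .
qed

end



lemma cinner_self: "cinner x x = complex_of_real ((norm x)^2)"
proof -
  have "Im (cinner x x) = 0"
  proof -
    have "cinner x x = cnj (cinner x x)" by (simp add: cinner_cnj)
    then have "Im (cinner x x) = Im (cnj (cinner x x))" by simp
    then show ?thesis by simp
  qed
  then show ?thesis by (simp add: complex_eq_iff norm_sq_cinner)
qed

lemma cinner_neg_right: "cinner x (- y) = - cinner x y"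
  by (simp add: cinner_def sum_negf)
lemma cinner_neg_left: "cinner (- x) y = - cinner x y"
  by (simp add: cinner_def sum_negf)

lemma mvneg: "A *v (- v) = - (A *v (v::complex^'n))"
  by (simp add: vec_eq_iff matrix_vector_mult_def sum_negf)

lemma unit_exp: "cnj (exp (\<i> * complex_of_real t)) * exp (\<i> * complex_of_real t) = 1"
  by (simp add: exp_cnj exp_minus)

lemma cinner_combo:
  assumes "cinner u u = 1" "cinner w w = 1" "cinner u w = 0"
  shows "cinner (X *s u + Y *s w) (Z *s u + W *s w) = cnj X * Z + cnj Y * W"
proof -
  have "cinner w u = 0" using assms(3) cinner_cnj[of u w] by simp
  then show ?thesis using assms
    by (simp add: cinner_add_left cinner_add_right cinner_scale_left cinner_scale_right)
qed

context
  fixes H :: "complex^'n^'n" and K :: real and N :: real and lp lm :: "complex^'n"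
  assumes bnd: "\<And>x. norm (H *v x) \<le> K * norm x" and K0: "K \<ge> 0" and herm: "hermitian H"
    and lpe: "H *v lp = complex_of_real (N / 2) *s lp" and lpn: "norm lp = 1"
    and lme: "H *v lm = complex_of_real (- N / 2) *s lm" and lmn: "norm lm = 1"
    and Npos: "N > 0"
begin

lemma lp1: "cinner lp lp = 1" using lpn by (simp add: cinner_self)
lemma lm1: "cinner lm lm = 1" using lmn by (simp add: cinner_self)
lemma lpm: "cinner lp lm = 0"
proof -
  have "cinner (H *v lp) lm = cinner lp (H *v lm)" by (rule cinner_herm[OF herm])
  then have "complex_of_real (N/2) * cinner lp lm = complex_of_real (- N/2) * cinner lp lm"
    by (simp add: lpe lme cinner_scale_left cinner_scale_right cinner_neg_right)
  then have "complex_of_real N * cinner lp lm = 0" by (simp add: algebra_simps)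
  then show ?thesis using Npos by simp
qed

lemma part3:
  assumes U: "unitary U"
    and Ulp: "U *v lp = exp (\<i> * of_real chi) *s lm"
    and Ulm: "U *v lm = exp (- \<i> * of_real chi) *s lp"
  shows "QFI (encoded H U (complex_of_real (1 / sqrt 2) *s (lp + exp (\<i> * of_real \<alpha>) *s lm))) g = 4 * N\<^sup>2"
proof -
  define s where "s = complex_of_real (1 / sqrt 2)"
  define e where "e = exp (\<i> * of_real \<alpha>)"
  define q where "q = exp (\<i> * of_real chi)"
  define q' where "q' = exp (- \<i> * of_real chi)"
  define \<mu> where "\<mu> = complex_of_real (N/2)"
  define a where "a = exp (\<i> * of_real (g * N / 2))"
  define b where "b = exp (- \<i> * of_real (g * N / 2))"
  define P where "P = mexp (cmat_scale (\<i> * of_real g) H)"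
  define Q where "Q = mexp (cmat_scale (- \<i> * of_real g) H)"
  define psi0 where "psi0 = s *s (lp + e *s lm)"
  have Plp: "P *v lp = a *s lp" unfolding P_def a_def
    by (simp add: mexp_eigen[OF bnd K0 lpe] mult_ac)
  have Plm: "P *v lm = b *s lm" unfolding P_def b_def
    by (simp add: mexp_eigen[OF bnd K0 lme] mult_ac)
  have Qlp: "Q *v lp = b *s lp" unfolding Q_def b_def
    by (simp add: mexp_eigen[OF bnd K0 lpe] mult_ac)
  have Qlm: "Q *v lm = a *s lm" unfolding Q_def a_def
    by (simp add: mexp_eigen[OF bnd K0 lme] mult_ac)
  have Hlm: "H *v lm = (- \<mu>) *s lm" using lme \<mu>_def by simp
  have Hlp: "H *v lp = \<mu> *s lp" using lpe \<mu>_def by simp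
  have Ulp': "U *v lp = q *s lm" using Ulp q_def by simp
  have Ulm': "U *v lm = q' *s lp" using Ulm q'_def by simp
  define d where "d = P *v (U *v (Q *v ((- \<i>) *s (H *v psi0)))) + P *v (\<i> *s (H *v (U *v (Q *v psi0))))"
  have vd: "vector_derivative (encoded H U psi0) (at g) = d"
    unfolding d_def P_def Q_def by (rule vector_derivative_at[OF enc_deriv[OF bnd K0 herm]])
  have psi: "encoded H U psi0 g = P *v (U *v (Q *v psi0))"
    unfolding P_def Q_def by (rule enc_eq[OF bnd K0 herm])
  have dform: "d = (2 * \<i> * s * \<mu> * e * a * a * q') *s lp + (- 2 * \<i> * s * \<mu> * b * b * q) *s lm"
    unfolding d_def psi0_def
    by (simp add: matrix_vector_right_distrib mvs vector_smult_assoc mvneg matrix_vector_mult_diff_distrib Plp Plm Qlp Qlm Hlp Hlm Ulp' Ulm')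
       (simp add: vec_eq_iff algebra_simps)
  have pform: "encoded H U psi0 g = (s * e * a * a * q') *s lp + (s * b * b * q) *s lm"
    unfolding psi unfolding psi0_def
    by (simp add: matrix_vector_right_distrib mvs vector_smult_assoc mvneg matrix_vector_mult_diff_distrib Plp Plm Qlp Qlm Hlp Hlm Ulp' Ulm')
       (simp add: vec_eq_iff algebra_simps)
  define X where "X = 2 * \<i> * s * \<mu> * e * a * a * q'"
  define Y where "Y = - 2 * \<i> * s * \<mu> * b * b * q"
  define Z where "Z = s * e * a * a * q'"
  define W where "W = s * b * b * q"
  have cs: "cnj s = s" unfolding s_def by simp
  have ss: "s * s = 1/2"
  proof -
    have "(1 / sqrt 2) * (1 / sqrt 2) = (1/2::real)" by (simp add: field_simps)
    then have "complex_of_real ((1 / sqrt 2) * (1 / sqrt 2)) = complex_of_real (1/2)" by simp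
    then show ?thesis unfolding s_def by (simp only: of_real_mult) simp
  qed
  have cmu: "cnj \<mu> = \<mu>" unfolding \<mu>_def by simp
  have mumu: "\<mu> * \<mu> * 4 = complex_of_real (N^2)" unfolding \<mu>_def
    by (simp add: power2_eq_square)
  have ca: "cnj a = b" unfolding a_def b_def by (simp add: exp_cnj)
  have cb: "cnj b = a" unfolding a_def b_def by (simp add: exp_cnj)
  have ab: "a * b = 1" using unit_exp[of "g * N / 2"] ca unfolding a_def by (simp add: mult.commute)
  have cq: "cnj q = q'" unfolding q_def q'_def by (simp add: exp_cnj)
  have cq': "cnj q' = q" unfolding q_def q'_def by (simp add: exp_cnj)
  have qq: "q * q' = 1" using unit_exp[of chi] cq unfolding q_def by (simp add: mult.commute)
  have ee: "cnj e * e = 1" unfolding e_def by (rule unit_exp)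
  have ii: "\<i> * \<i> = -1" by simp
  have cX: "cnj X = - 2 * \<i> * s * \<mu> * cnj e * b * b * q" unfolding X_def
    by (simp add: cs cmu ca cq')
  have cY: "cnj Y = 2 * \<i> * s * \<mu> * a * a * q'" unfolding Y_def
    by (simp add: cs cmu cb cq)
  have cZ: "cnj Z = s * cnj e * b * b * q" unfolding Z_def
    by (simp add: cs cmu ca cq')
  have cW: "cnj W = s * a * a * q'" unfolding W_def
    by (simp add: cs cmu cb cq)
  have dd: "cnj X * X + cnj Y * Y = complex_of_real (N^2)"
    unfolding cX cY using ss mumu ab qq ee ii unfolding X_def Y_def by algebra
  have pd: "cnj Z * X + cnj W * Y = 0"
    unfolding cZ cW using ss ab qq ee ii unfolding X_def Y_def by algebra
  have dform': "d = X *s lp + Y *s lm" using dform X_def Y_def by simp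
  have pform': "encoded H U psi0 g = Z *s lp + W *s lm" using pform Z_def W_def by simp
  have "QFI (encoded H U psi0) g = 4 * (Re (cinner d d) - (cmod (cinner (encoded H U psi0 g) d))^2)"
    unfolding QFI_def vd Let_def by simp
  also have "\<dots> = 4 * N^2"
    unfolding dform' pform' cinner_combo[OF lp1 lm1 lpm] dd pd by simp
  finally show ?thesis unfolding psi0_def s_def e_def .
qed

end



definition outer :: "complex^'n \<Rightarrow> complex^'n \<Rightarrow> complex^'n^'n" where
  "outer u w = (\<chi> i j. u$i * cnj (w$j))"

lemma outer_vec: "outer u w *v v = cinner w v *s u"
  by (simp add: vec_eq_iff outer_def matrix_vector_mult_def cinner_def sum_distrib_left mult_ac)

lemma cinner_diff_right: "cinner x (y - z) = cinner x y - cinner x z"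
  by (simp add: cinner_def right_diff_distrib sum_subtractf)

lemma swap_unitary:
  assumes p1: "cinner lp lp = 1" and m1: "cinner lm lm = 1" and pm: "cinner lp lm = 0"
  defines "U0 \<equiv> mat 1 - outer lp lp - outer lm lm + outer lm lp + outer lp lm"
  shows "unitary U0" "U0 *v lp = lm" "U0 *v lm = lp"
proof -
  have mp: "cinner lm lp = 0" using pm cinner_cnj[of lp lm] by simp
  have Ux: "U0 *v x = x - cinner lp x *s lp - cinner lm x *s lm + cinner lp x *s lm + cinner lm x *s lp" for x
    unfolding U0_def
    by (simp add: matrix_vector_mult_add_rdistrib matrix_vector_mult_diff_rdistrib outer_vec)
  show "U0 *v lp = lm" using p1 mp by (simp add: Ux)
  show "U0 *v lm = lp" using m1 pm by (simp add: Ux)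
  have adj: "adjoint_mat U0 = U0"
    unfolding U0_def by (simp add: vec_eq_iff adjoint_mat_def outer_def mat_def)
  have "U0 *v (U0 *v x) = x" for x
  proof -
    have a: "cinner lp (U0 *v x) = cinner lm x"
      using p1 pm by (simp add: Ux cinner_add_right cinner_diff_right cinner_scale_right)
    have b: "cinner lm (U0 *v x) = cinner lp x"
      using m1 mp by (simp add: Ux cinner_add_right cinner_diff_right cinner_scale_right)
    have "U0 *v (U0 *v x) = U0 *v x - cinner lm x *s lp - cinner lp x *s lm + cinner lm x *s lm + cinner lp x *s lp"
      by (subst Ux) (simp only: a b)
    then show ?thesis by (simp add: Ux algebra_simps)
  qed
  then have "U0 ** U0 = mat 1" by (simp add: matrix_eq matrix_vector_mul_assoc[symmetric])
  then show "unitary U0" by (simp add: unitary_def adj)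
qed

theorem mainTheorem10:
  fixes H0 :: "complex ^ 'n ^ 'n" and N :: real and lp lm :: "complex ^ 'n"
  assumes "N > 0"
    and "hermitian H0"
    and "\<And>c. is_eigenvalue H0 c \<Longrightarrow> - N / 2 \<le> Re c \<and> Re c \<le> N / 2"
    and "H0 *v lp = complex_of_real (N / 2) *s lp" and "norm lp = 1"
    and "H0 *v lm = complex_of_real (- N / 2) *s lm" and "norm lm = 1"
  shows "(\<forall>psi0 U1 g. norm psi0 = 1 \<longrightarrow> unitary U1 \<longrightarrow>
            QFI (encoded H0 U1 psi0) g \<le> 4 * N\<^sup>2)
       \<and> (\<exists>psi0 U1. norm psi0 = 1 \<and> unitary U1 \<and>
            (\<forall>g. QFI (encoded H0 U1 psi0) g = 4 * N\<^sup>2))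
       \<and> (\<forall>\<alpha> chi U1 g. unitary U1
            \<longrightarrow> U1 *v lp = exp (\<i> * of_real chi) *s lm
            \<longrightarrow> U1 *v lm = exp (- \<i> * of_real chi) *s lp
            \<longrightarrow> (\<forall>v. cinner lp v = 0 \<longrightarrow> cinner lm v = 0 \<longrightarrow>
                   cinner lp (U1 *v v) = 0 \<and> cinner lm (U1 *v v) = 0)
            \<longrightarrow> QFI (encoded H0 U1
                   (complex_of_real (1 / sqrt 2) *s (lp + exp (\<i> * of_real \<alpha>) *s lm))) g
                = 4 * N\<^sup>2)"
proof -
  have bnd: "\<And>x. norm (H0 *v x) \<le> N / 2 * norm x"
    by (rule opnorm_bound[OF assms(2) assms(3)])
  have K0: "N / 2 \<ge> 0" using assms(1) by simp
  note P3 = part3[OF bnd K0 assms(2) assms(4) assms(5) assms(6) assms(7) assms(1)]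
  have c1: "\<forall>psi0 U1 g. norm psi0 = 1 \<longrightarrow> unitary U1 \<longrightarrow> QFI (encoded H0 U1 psi0) g \<le> 4 * N\<^sup>2"
  proof (intro allI impI)
    fix psi0 :: "complex^'n" and U1 :: "complex^'n^'n" and g :: real
    assume "norm psi0 = 1" "unitary U1"
    then show "QFI (encoded H0 U1 psi0) g \<le> 4 * N\<^sup>2"
      using QFI_bound[OF bnd K0 assms(2), of U1 psi0 g] by simp
  qed
  have c3: "\<forall>\<alpha> chi U1 g. unitary U1
            \<longrightarrow> U1 *v lp = exp (\<i> * of_real chi) *s lm
            \<longrightarrow> U1 *v lm = exp (- \<i> * of_real chi) *s lp
            \<longrightarrow> (\<forall>v. cinner lp v = 0 \<longrightarrow> cinner lm v = 0 \<longrightarrow>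
                   cinner lp (U1 *v v) = 0 \<and> cinner lm (U1 *v v) = 0)
            \<longrightarrow> QFI (encoded H0 U1
                   (complex_of_real (1 / sqrt 2) *s (lp + exp (\<i> * of_real \<alpha>) *s lm))) g
                = 4 * N\<^sup>2"
    using P3 by blast
  have p1: "cinner lp lp = 1" and m1: "cinner lm lm = 1" and pm: "cinner lp lm = 0"
    using lp1[OF bnd K0 assms(2) assms(4) assms(5) assms(6) assms(7) assms(1)]
      lm1[OF bnd K0 assms(2) assms(4) assms(5) assms(6) assms(7) assms(1)]
      lpm[OF bnd K0 assms(2) assms(4) assms(5) assms(6) assms(7) assms(1)] by auto
  define U0 where "U0 = mat 1 - outer lp lp - outer lm lm + outer lm lp + outer lp lm"
  have U0: "unitary U0" "U0 *v lp = lm" "U0 *v lm = lp"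
    using swap_unitary[OF p1 m1 pm] unfolding U0_def by auto
  define psi0 where "psi0 = complex_of_real (1 / sqrt 2) *s (lp + exp (\<i> * of_real 0) *s lm)"
  have "norm psi0 = 1"
  proof -
    define s where "s = complex_of_real (1 / sqrt 2)"
    have ss: "cnj s * s = 1/2"
    proof -
      have "(1 / sqrt 2) * (1 / sqrt 2) = (1/2::real)" by (simp add: field_simps)
      then have "complex_of_real ((1 / sqrt 2) * (1 / sqrt 2)) = complex_of_real (1/2)" by simp
      then show ?thesis unfolding s_def by (simp only: of_real_mult complex_cnj_complex_of_real) simp
    qed
    have "psi0 = s *s lp + s *s lm" unfolding psi0_def s_def by (simp add: vector_ssub_ldistrib vector_add_ldistrib)
    then have "cinner psi0 psi0 = cnj s * s + cnj s * s" by (simp add: cinner_combo[OF p1 m1 pm])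
    then have "cinner psi0 psi0 = 1" using ss by simp
    then have "(norm psi0)^2 = 1^2" by (simp add: norm_sq_cinner)
    then show ?thesis using power2_eq_iff_nonneg[of "norm psi0" 1] by simp
  qed
  moreover have "\<forall>g. QFI (encoded H0 U0 psi0) g = 4 * N\<^sup>2"
  proof
    fix g
    show "QFI (encoded H0 U0 psi0) g = 4 * N\<^sup>2"
      unfolding psi0_def by (rule P3[where chi=0]) (use U0 in simp_all)
  qed
  ultimately have c2: "\<exists>psi0 U1. norm psi0 = 1 \<and> unitary U1 \<and> (\<forall>g. QFI (encoded H0 U1 psi0) g = 4 * N\<^sup>2)"
    using U0(1) by blast
  show ?thesis using c1 c2 c3 by blast
qed

end
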